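(* Let $\mathcal{A}\subset\mathbb{N}$ be an alphabet. If the semigroup $\Gamma_{\mathcal{A}}$ does not have everywhere strong approximation, then there exist an integer $k^{\ast}\ge 2$ and a residue $r \pmod{k^{\ast}}$ such that $\mathcal{A}\subseteq r+k^{\ast}\mathbb{Z}$.
   Context: For $a\in\mathbb{N}$ let $\gamma_a=\begin{pmatrix}0&1\\1&a\end{pmatrix}$. $\mathcal{G}_{\mathcal{A}}\subset \mathrm{GL}_2(\mathbb{Z})$ is the semigroup generated by $\gamma_a$, $a\in\mathcal{A}$, and $\Gamma_{\mathcal{A}}\subset\mathrm{SL}_2(\mathbb{Z})$ is its determinant-one subsemigroup, generated by the products $\gamma_a\gamma_{a'}$, $a,a'\in\mathcal{A}$. $\Gamma_{\mathcal{A}}$ has everywhere strong approximation if for every $q\in\mathbb{N}$ the reduction of $\Gamma_{\mathcal{A}}$ modulo $q$ equals $\mathrm{SL}_2(\mathbb{Z}/q\mathbb{Z})$. *)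

theory Defs
  imports "HOL-Analysis.Analysis" "HOL-Number_Theory.Cong"
begin

type_synonym mat2 = "int ^ 2 ^ 2"

definition mk2 :: "int \<Rightarrow> int \<Rightarrow> int \<Rightarrow> int \<Rightarrow> mat2" where
  "mk2 a b c d = vector [vector [a, b], vector [c, d]]"

definition gamma :: "nat \<Rightarrow> mat2" where
  "gamma a = mk2 0 1 1 (int a)"

inductive_set G_semigroup :: "nat set \<Rightarrow> mat2 set" for A where
  gen: "a \<in> A \<Longrightarrow> gamma a \<in> G_semigroup A"
| mult: "M \<in> G_semigroup A \<Longrightarrow> N \<in> G_semigroup A \<Longrightarrow> M ** N \<in> G_semigroup A"

definition Gamma_semigroup :: "nat set \<Rightarrow> mat2 set" where
  "Gamma_semigroup A = {M \<in> G_semigroup A. det M = 1}"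

definition mat_cong :: "int \<Rightarrow> mat2 \<Rightarrow> mat2 \<Rightarrow> bool" where
  "mat_cong q M N \<longleftrightarrow> (\<forall>i j. [M $ i $ j = N $ i $ j] (mod q))"

text \<open>Reduction mod q of S equals SL_2(Z/qZ): every integer matrix whose determinant is
  1 mod q (i.e. every lift of an element of SL_2(Z/qZ)) is congruent mod q to an element of S,
  and every element of S reduces into SL_2(Z/qZ).\<close>
definition surj_mod :: "mat2 set \<Rightarrow> int \<Rightarrow> bool" where
  "surj_mod S q \<longleftrightarrow> (\<forall>M. [det M = 1] (mod q) \<longrightarrow> (\<exists>N\<in>S. mat_cong q M N))
                      \<and> (\<forall>N\<in>S. [det N = 1] (mod q))"

definition everywhere_strong_approx :: "mat2 set \<Rightarrow> bool" where
  "everywhere_strong_approx S \<longleftrightarrow> (\<forall>q::nat. q \<ge> 1 \<longrightarrow> surj_mod S (int q))"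

end

theory Submission
  imports Defs
begin

lemma mk2_nth [simp]:
  "mk2 a b c d $ 1 $ 1 = a" "mk2 a b c d $ 1 $ 2 = b"
  "mk2 a b c d $ 2 $ 1 = c" "mk2 a b c d $ 2 $ 2 = d"
  by (simp_all add: mk2_def)

lemma mk2_eta: "M = mk2 (M$1$1) (M$1$2) (M$2$1) (M$2$2)"
  by (simp add: vec_eq_iff forall_2)

lemma mk2_mult [simp]:
  "mk2 a b c d ** mk2 e f g h = mk2 (a*e+b*g) (a*f+b*h) (c*e+d*g) (c*f+d*h)"
  by (simp add: vec_eq_iff forall_2 matrix_matrix_mult_def sum_2)

lemma det_mk2 [simp]: "det (mk2 a b c d) = a*d - b*c"
  by (simp add: det_2)

lemma mat1_mk2: "(mat 1 :: mat2) = mk2 1 0 0 1"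
  by (simp add: vec_eq_iff forall_2 mat_def)

lemma mat_cong_mk2:
  "mat_cong q (mk2 a b c d) (mk2 e f g h) \<longleftrightarrow>
    [a = e] (mod q) \<and> [b = f] (mod q) \<and> [c = g] (mod q) \<and> [d = h] (mod q)"
  by (simp add: mat_cong_def forall_2)

lemma mat_cong_refl: "mat_cong q M M"
  by (simp add: mat_cong_def)

lemma mat_cong_sym: "mat_cong q M N \<Longrightarrow> mat_cong q N M"
  by (simp add: mat_cong_def cong_sym)

lemma mat_cong_trans: "mat_cong q M N \<Longrightarrow> mat_cong q N K \<Longrightarrow> mat_cong q M K"
  unfolding mat_cong_def using cong_trans by blast

lemma mat_cong_mult:
  assumes "mat_cong q X Y" "mat_cong q Z W"
  shows "mat_cong q (X ** Z) (Y ** W)"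
proof -
  have "mat_cong q (mk2 (X$1$1) (X$1$2) (X$2$1) (X$2$2) ** mk2 (Z$1$1) (Z$1$2) (Z$2$1) (Z$2$2))
     (mk2 (Y$1$1) (Y$1$2) (Y$2$1) (Y$2$2) ** mk2 (W$1$1) (W$1$2) (W$2$1) (W$2$2))"
    using assms unfolding mk2_mult mat_cong_mk2 unfolding mat_cong_def
    by (intro conjI cong_add cong_mult) auto
  then show ?thesis using mk2_eta[of X] mk2_eta[of Y] mk2_eta[of Z] mk2_eta[of W] by simp
qed


lemma cong_by: "x = y + q*w \<Longrightarrow> [x = y] (mod (q::int))"
  unfolding cong_iff_dvd_diff by simp

lemma euclid:
  fixes P :: "mat2 \<Rightarrow> bool" and q :: int
  assumes mult: "\<And>X Y. P X \<Longrightarrow> P Y \<Longrightarrow> P (X ** Y)"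
    and cg: "\<And>X Y. P X \<Longrightarrow> mat_cong q Y X \<Longrightarrow> P Y"
    and U: "\<And>t. P (mk2 1 t 0 1)" and L: "\<And>t. P (mk2 1 0 t 1)"
  shows "[det M = 1] (mod q) \<Longrightarrow> P M"
proof (induction "nat \<bar>M$2$1\<bar>" arbitrary: M rule: less_induct)
  case less
  obtain a b c d where Mdef: "M = mk2 a b c d"
    by (rule that[OF mk2_eta])
  show ?case
  proof (cases "c = 0")
    case True
    then have "[a*d = 1] (mod q)" using less.prems Mdef by simp
    then obtain k0 where "1 = a*d + q*k0" unfolding cong_iff_lin by blast
    then obtain k where hk: "a*d = 1 + q*k" by (intro that[of "-k0"]) simp
    define X where "X = mk2 1 a 0 1 ** mk2 1 0 (-d) 1 ** mk2 1 a 0 1 **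
       (mk2 1 (-1) 0 1 ** mk2 1 0 1 1 ** mk2 1 (-1) 0 1) ** mk2 1 (b*d) 0 1"
    have PX: "P X" unfolding X_def by (simp only: mult U L)
    have "mat_cong q M X"
      unfolding X_def Mdef True mk2_mult mat_cong_mk2
      apply (intro conjI)
      apply (rule cong_by[where w="a*k"], use hk in algebra)
      apply (rule cong_by[where w="b*q*k*k - k"], use hk in algebra)
      apply (rule cong_by[where w="k"], use hk in algebra)
      apply (rule cong_by[where w="k*b*d"], use hk in algebra)
      done

    then show ?thesis using cg PX by blast
  next
    case False
    define s where "s = a div c"
    define r where "r = a mod c"
    have ar: "a = s*c + r" unfolding s_def r_def by simp
    define M2 where "M2 = mk2 (-c) (-d) r (b - s*d)"
    have lt: "nat \<bar>M2$2$1\<bar> < nat \<bar>M$2$1\<bar>"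
      using abs_mod_less[OF False, of a] unfolding M2_def Mdef r_def by simp
    have "det M2 = det M" unfolding M2_def Mdef ar by (simp add: algebra_simps)
    then have P2: "P M2" using less.hyps[OF lt] less.prems by simp
    have eq: "(mk2 1 s 0 1 ** (mk2 1 1 0 1 ** mk2 1 0 (-1) 1 ** mk2 1 1 0 1)) ** M2 = M"
      unfolding M2_def Mdef ar by (simp add: algebra_simps)
    have "P ((mk2 1 s 0 1 ** (mk2 1 1 0 1 ** mk2 1 0 (-1) 1 ** mk2 1 1 0 1)) ** M2)"
      by (simp only: mult U L P2)
    then show ?thesis using eq by simp
  qed
qed


fun mpow :: "mat2 \<Rightarrow> nat \<Rightarrow> mat2" where
  "mpow M 0 = mat 1"
| "mpow M (Suc n) = M ** mpow M n"

lemma mpow_add: "mpow M (m + n) = mpow M m ** mpow M n"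
  by (induction m) (simp_all add: matrix_mul_assoc)

lemma mpow_Suc': "mpow M (Suc n) = mpow M n ** M"
  using mpow_add[of M n 1] by simp

lemma mpow_inv: "G ** H = mat 1 \<Longrightarrow> mpow G n ** mpow H n = mat 1"
proof (induction n)
  case 0 then show ?case by simp
next
  case (Suc n)
  have "mpow G (Suc n) ** mpow H (Suc n) = G ** (mpow G n ** mpow H n) ** H"
    by (subst mpow_Suc'[of H n]) (simp add: matrix_mul_assoc)
  then show ?case using Suc by simp
qed

lemma finite_order:
  assumes q: "q \<ge> 1" and GH: "G ** H = mat 1"
  shows "\<exists>m\<ge>1. mat_cong q (mpow G m) (mat 1)"
proof -
  define f where "f n = (mpow G n $1$1 mod q, mpow G n $1$2 mod q, mpow G n $2$1 mod q, mpow G n $2$2 mod q)" for n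
  have "range f \<subseteq> {0..<q} \<times> {0..<q} \<times> {0..<q} \<times> {0..<q}"
    using q unfolding f_def by auto
  then have "finite (range f)" by (rule finite_subset) simp
  then have "\<not> inj f" using finite_imageD infinite_UNIV_nat by blast
  then obtain i j where ij: "i \<noteq> j" "f i = f j" unfolding inj_def by blast
  have key: "\<exists>m\<ge>1. mat_cong q (mpow G m) (mat 1)" if "i < j" "f i = f j" for i j
  proof -
    have c: "mat_cong q (mpow G i) (mpow G j)"
      using that(2) unfolding f_def mat_cong_def forall_2 cong_def by simp
    define d where "d = j - i"
    have j: "mpow G j = mpow G d ** mpow G i"
      using that(1) mpow_add[of G d i] unfolding d_def by simp
    have "mat_cong q (mpow G i ** mpow H i) (mpow G j ** mpow H i)"
      by (rule mat_cong_mult[OF c mat_cong_refl])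
    moreover have "mpow G j ** mpow H i = mpow G d"
      unfolding j using mpow_inv[OF GH, of i] by (simp add: matrix_mul_assoc[symmetric])
    ultimately have "mat_cong q (mat 1) (mpow G d)" using mpow_inv[OF GH, of i] by simp
    then show ?thesis using that(1) mat_cong_sym unfolding d_def
      by (intro exI[of _ "j - i"]) auto
  qed
  show ?thesis
  proof (cases "i < j")
    case True then show ?thesis using key ij by blast
  next
    case False then show ?thesis using key[of j i] ij by auto
  qed
qed


lemma gamma_mk2: "gamma a = mk2 0 1 1 (int a)"
  by (simp add: gamma_def)

lemma det_gamma: "det (gamma a) = -1"
  by (simp add: gamma_def)

lemma gamma_ginv: "gamma b ** mk2 (- int b) 1 1 0 = mat 1"
  by (simp add: gamma_def mat1_mk2)

lemma ginv_gamma: "mk2 (- int b) 1 1 0 ** gamma b = mat 1"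
  by (simp add: gamma_def mat1_mk2)

lemma mpow_G: "a \<in> A \<Longrightarrow> mpow (gamma a) (Suc n) \<in> G_semigroup A"
proof (induction n)
  case 0 then show ?case by (simp add: G_semigroup.gen)
next
  case (Suc n) then show ?case
    using G_semigroup.mult[OF G_semigroup.gen[OF Suc.prems] Suc.IH] by simp
qed

lemma det_mpow: "det (mpow M n) = det M ^ n"
  by (induction n) (simp_all add: det_mul det_I)

lemma in_Gamma: "X \<in> G_semigroup A \<Longrightarrow> det X = 1 \<Longrightarrow> X \<in> Gamma_semigroup A"
  by (simp add: Gamma_semigroup_def)

lemma gen_L:
  assumes q: "q \<ge> 1" and a: "a \<in> A" and b: "b \<in> A"
  shows "\<exists>N\<in>Gamma_semigroup A. mat_cong q (mk2 1 0 (int a - int b) 1) N"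
    and "\<exists>N\<in>Gamma_semigroup A. mat_cong q (mk2 1 (int a - int b) 0 1) N"
proof -
  let ?g = "gamma b" and ?h = "mk2 (- int b) 1 1 0"
  obtain m where m: "m \<ge> 1" "mat_cong q (mpow ?g m) (mat 1)"
    using finite_order[OF q gamma_ginv] by blast
  define n where "n = 2*m - 1"
  have nS: "Suc n = m + m" unfolding n_def using m(1) by simp
  have n1: "n = Suc (2*m - 2)" unfolding n_def using m(1) by simp
  have pg: "mpow ?g n \<in> G_semigroup A" using mpow_G[OF b] n1 by simp
  have dn: "det (mpow ?g n) = (-1)^n" by (simp add: det_mpow det_gamma)
  have odd: "(-1::int)^n = -1" unfolding n_def using m(1)
    by (simp add: power_minus_odd)
  have c2: "mat_cong q (mpow ?g (Suc n)) (mat 1)"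
    unfolding nS mpow_add using mat_cong_mult[OF m(2) m(2)] by simp
  show "\<exists>N\<in>Gamma_semigroup A. mat_cong q (mk2 1 0 (int a - int b) 1) N"
  proof (intro bexI)
    let ?N = "gamma a ** mpow ?g n"
    show "?N \<in> Gamma_semigroup A"
      by (rule in_Gamma, rule G_semigroup.mult[OF G_semigroup.gen[OF a] pg])
         (simp add: det_mul det_gamma dn odd)
    have e1: "?N ** ?g ** ?h = ?N"
      using gamma_ginv[of b] by (simp add: matrix_mul_assoc[symmetric])
    have e2: "?N ** ?g = gamma a ** mpow ?g (Suc n)"
      by (subst mpow_Suc') (simp add: matrix_mul_assoc)
    have "mat_cong q (?N ** ?g ** ?h) (gamma a ** mat 1 ** ?h)"
      unfolding e2 by (intro mat_cong_mult mat_cong_refl c2)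
    moreover have "gamma a ** mat 1 ** ?h = mk2 1 0 (int a - int b) 1"
      by (simp add: gamma_def)
    ultimately show "mat_cong q (mk2 1 0 (int a - int b) 1) ?N"
      using e1 mat_cong_sym by metis
  qed
  show "\<exists>N\<in>Gamma_semigroup A. mat_cong q (mk2 1 (int a - int b) 0 1) N"
  proof (intro bexI)
    let ?N = "mpow ?g n ** gamma a"
    show "?N \<in> Gamma_semigroup A"
      by (rule in_Gamma, rule G_semigroup.mult[OF pg G_semigroup.gen[OF a]])
         (simp add: det_mul det_gamma dn odd)
    have e1: "?h ** ?g ** ?N = ?N"
      using ginv_gamma[of b] by simp
    have e2: "?g ** ?N = mpow ?g (Suc n) ** gamma a"
      by (simp add: matrix_mul_assoc)
    have "mat_cong q (?h ** (?g ** ?N)) (?h ** (mat 1 ** gamma a))"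
      unfolding e2 by (intro mat_cong_mult mat_cong_refl c2)
    moreover have "?h ** (mat 1 ** gamma a) = mk2 1 (int a - int b) 0 1"
      by (simp add: gamma_def)
    ultimately show "mat_cong q (mk2 1 (int a - int b) 0 1) ?N"
      using e1 mat_cong_sym matrix_mul_assoc by metis
  qed
qed


lemma main_surj:
  fixes A :: "nat set" and q :: int
  assumes nc: "\<not> (\<exists>(k::int) r. k \<ge> 2 \<and> (\<forall>a\<in>A. [int a = r] (mod k)))"
    and q: "q \<ge> 1"
  shows "surj_mod (Gamma_semigroup A) q"
proof -
  obtain a0 where a0: "a0 \<in> A"
    using nc by (metis all_not_in_conv ex_in_conv order_refl one_add_one
       add_le_cancel_left one_le_numeral)
  define P where "P X = (\<exists>N\<in>Gamma_semigroup A. mat_cong q X N)" for X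
  have Pmult: "P (X ** Y)" if PXY: "P X" "P Y" for X Y
  proof -
    obtain N1 N2 where N: "N1 \<in> Gamma_semigroup A" "mat_cong q X N1"
        "N2 \<in> Gamma_semigroup A" "mat_cong q Y N2"
      using PXY unfolding P_def by blast
    have "N1 ** N2 \<in> Gamma_semigroup A"
      using N(1,3) unfolding Gamma_semigroup_def by (auto intro: G_semigroup.mult simp: det_mul)
    then show ?thesis unfolding P_def using mat_cong_mult[OF N(2,4)] by blast
  qed
  have Pcong: "P Y" if "P X" "mat_cong q Y X" for X Y
    using that mat_cong_trans unfolding P_def by blast
  define S where "S = {t. P (mk2 1 0 t 1) \<and> P (mk2 1 t 0 1)}"
  have Sadd: "x + y \<in> S" if "x \<in> S" "y \<in> S" for x y
  proof -
    have "mk2 1 0 x 1 ** mk2 1 0 y 1 = mk2 1 0 (x + y) 1"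
      "mk2 1 x 0 1 ** mk2 1 y 0 1 = mk2 1 (x + y) 0 1" by (simp_all add: algebra_simps)
    then show ?thesis using that Pmult unfolding S_def by (metis mem_Collect_eq)
  qed
  have Scong: "y \<in> S" if "x \<in> S" "[y = x] (mod q)" for x y
  proof -
    have "mat_cong q (mk2 1 0 y 1) (mk2 1 0 x 1)" "mat_cong q (mk2 1 y 0 1) (mk2 1 x 0 1)"
      using that(2) by (simp_all add: mat_cong_mk2)
    then show ?thesis using that(1) Pcong unfolding S_def by blast
  qed
  have Sdiff: "int a - int b \<in> S" if "a \<in> A" "b \<in> A" for a b
    using gen_L[OF q that] unfolding S_def P_def by blast
  have S0: "0 \<in> S" using Sdiff[OF a0 a0] by simp
  have Snat: "int (Suc n) * x \<in> S" if "x \<in> S" for x n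
  proof (induction n)
    case 0 then show ?case using that by simp
  next
    case (Suc n)
    have "int (Suc (Suc n)) * x = x + int (Suc n) * x" by (simp add: algebra_simps)
    then show ?case using Sadd[OF that Suc] by simp
  qed
  have Sneg: "- x \<in> S" if "x \<in> S" for x
  proof -
    have e: "int (Suc (nat (2*q - 2))) = 2*q - 1" using q by simp
    have "int (Suc (nat (2*q - 2))) * x \<in> S" using Snat[OF that] .
    then have "(2*q - 1) * x \<in> S" unfolding e .
    moreover have "[- x = (2*q - 1) * x] (mod q)"
      by (rule cong_by[where w="-2*x"]) (simp add: algebra_simps)
    ultimately show ?thesis using Scong by blast
  qed
  have Sint: "z * x \<in> S" if "x \<in> S" for x z
  proof (cases "z > 0")
    case True
    then have "z = int (Suc (nat z - 1))" by simp
    then show ?thesis using Snat[OF that] by metis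
  next
    case False
    show ?thesis
    proof (cases "z = 0")
      case True then show ?thesis using S0 by simp
    next
      case False
      with \<open>\<not> z > 0\<close> have "-z = int (Suc (nat (-z) - 1))" by simp
      then have "(-z) * x \<in> S" using Snat[OF that] by metis
      then show ?thesis using Sneg by fastforce
    qed
  qed
  have Sq: "int (nat q) \<in> S"
    using Scong[OF S0, of q] q by (simp add: cong_0_iff)
  define g where "g = (LEAST n::nat. n > 0 \<and> int n \<in> S)"
  have gex: "nat q > 0 \<and> int (nat q) \<in> S" using Sq q by simp
  have g: "g > 0" "int g \<in> S" using LeastI[of "\<lambda>n. n > 0 \<and> int n \<in> S", OF gex]
    unfolding g_def by auto
  have gmin: "\<not> (n > 0 \<and> int n \<in> S)" if "n < g" for n
    using not_less_Least[of n "\<lambda>n. n > 0 \<and> int n \<in> S"] that unfolding g_def by blast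
  have gdvd: "int g dvd x" if "x \<in> S" for x
  proof -
    have "x + (- (x div int g)) * int g \<in> S" by (rule Sadd[OF that Sint[OF g(2)]])
    moreover have "x + (- (x div int g)) * int g = x mod int g"
      by (simp add: minus_div_mult_eq_mod[symmetric] algebra_simps)
    ultimately have m: "x mod int g \<in> S" by simp
    have "0 \<le> x mod int g" "x mod int g < int g" using g(1) by simp_all
    then have "nat (x mod int g) < g" "int (nat (x mod int g)) = x mod int g" by simp_all
    then have "\<not> nat (x mod int g) > 0" using gmin m by metis
    then have "x mod int g = 0" using \<open>0 \<le> x mod int g\<close> by simp
    then show ?thesis by (simp add: dvd_eq_mod_eq_0)
  qed
  have "g = 1"
  proof (rule ccontr)
    assume "g \<noteq> 1"
    then have "int g \<ge> 2" using g(1) by simp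
    moreover have "\<forall>a\<in>A. [int a = int a0] (mod int g)"
      using gdvd Sdiff a0 by (simp add: cong_iff_dvd_diff)
    ultimately show False using nc by blast
  qed
  then have S1: "1 \<in> S" using g by simp
  have SU: "t \<in> S" for t using Sint[OF S1, of t] by simp
  have PM: "P M" if "[det M = 1] (mod q)" for M
    by (rule euclid[where P=P, OF Pmult Pcong _ _ that]) (use SU S_def in auto)
  show ?thesis unfolding surj_mod_def
    using PM unfolding P_def Gamma_semigroup_def by auto
qed

theorem theoremB1:
  fixes A :: "nat set"
  assumes "0 \<notin> A"
    and "\<not> everywhere_strong_approx (Gamma_semigroup A)"
  shows "\<exists>(k::int) r. k \<ge> 2 \<and> (\<forall>a\<in>A. [int a = r] (mod k))"
proof (rule ccontr)
  assume nc: "\<not> (\<exists>(k::int) r. k \<ge> 2 \<and> (\<forall>a\<in>A. [int a = r] (mod k)))"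
  have "everywhere_strong_approx (Gamma_semigroup A)"
    unfolding everywhere_strong_approx_def
    using main_surj[OF nc] by simp
  then show False using assms(2) by simp
qed

end
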